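(* Let $v_j,v_i\in V(D^+)\setminus\{s\}$ be distinct vertices with $d_s(v_j)\le d_s(v_i)$. If $y\in C(v_j)\cap C(v_i)$ and $v_j$ is not an ancestor of $v_i$ in $D^+$, then $g^*(v_j)\neq\infty$ and $\min_{u\prec y} g(v_i,u)\ge g^*(v_j)$.
   Context: $G=(V,E,w)$ is a simple, connected, undirected graph with positive edge lengths, $s,t\in V$, $d(\cdot,\cdot)$ the shortest path distance in $G$, $d_s(v)=d(s,v)$. $D$ is the union of all shortest $st$-paths of $G$, and $D^+$ is the directed acyclic graph obtained from $D$ by orienting every edge toward $t$. $x\prec y$ means $x$ is an ancestor of $y$ in $D^+$ (a directed path of positive length from $x$ to $y$ exists). For $x\neq s$, $v\neq x$ is an $s$-dominator of $x$ if every directed path from $s$ to $x$ in $D^+$ contains $v$, and $I_s(x)$ is the $s$-dominator of $x$ closest to $x$ (every other $s$-dominator of $x$ is an $s$-dominator of $I_s(x)$). Symmetrically, for $x\neq t$, $v\neq x$ is a $t$-dominator of $x$ if every directed path from $x$ to $t$ in $D^+$ contains $v$, and $I_t(x)$ is the $t$-dominator closest to $x$. For $x\neq s$, $C(x)=\{v: I_s(x)\prec v\prec x\}$. For $x\neq s$ and $y\in V(D^+)$, $g(x,y)=d(y,x)$ if $y\in C(x)$ and $x\prec I_t(y)$, and $g(x,y)=\infty$ otherwise; $g^*(x)=\min_y g(x,y)$. A minimum over the empty set is $\infty$. *)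

theory Defs
  imports "HOL-Analysis.Analysis"
begin

definition is_walk :: "('a \<times> 'a) set \<Rightarrow> 'a \<Rightarrow> 'a \<Rightarrow> 'a list \<Rightarrow> bool" where
  "is_walk E u v xs \<longleftrightarrow> xs \<noteq> [] \<and> hd xs = u \<and> last xs = v \<and>
     successively (\<lambda>a b. (a, b) \<in> E) xs"

definition walk_len :: "('a \<Rightarrow> 'a \<Rightarrow> real) \<Rightarrow> 'a list \<Rightarrow> real" where
  "walk_len w xs = sum_list (map (\<lambda>(a, b). w a b) (zip xs (tl xs)))"

definition wgraph :: "'a set \<Rightarrow> ('a \<times> 'a) set \<Rightarrow> ('a \<Rightarrow> 'a \<Rightarrow> real) \<Rightarrow> bool" where
  "wgraph V E w \<longleftrightarrow> finite V \<and> E \<subseteq> V \<times> V \<and> sym E \<and> irrefl E \<and>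
     (\<forall>u v. (u, v) \<in> E \<longrightarrow> w u v > 0 \<and> w u v = w v u) \<and>
     (\<forall>u\<in>V. \<forall>v\<in>V. \<exists>xs. is_walk E u v xs)"

definition dist_G :: "('a \<times> 'a) set \<Rightarrow> ('a \<Rightarrow> 'a \<Rightarrow> real) \<Rightarrow> 'a \<Rightarrow> 'a \<Rightarrow> real" where
  "dist_G E w u v = Inf {walk_len w xs | xs. is_walk E u v xs}"

definition shortest_st :: "('a \<times> 'a) set \<Rightarrow> ('a \<Rightarrow> 'a \<Rightarrow> real) \<Rightarrow> 'a \<Rightarrow> 'a \<Rightarrow> 'a list \<Rightarrow> bool" where
  "shortest_st E w s t xs \<longleftrightarrow> is_walk E s t xs \<and> walk_len w xs = dist_G E w s t"

definition arcD :: "('a \<times> 'a) set \<Rightarrow> ('a \<Rightarrow> 'a \<Rightarrow> real) \<Rightarrow> 'a \<Rightarrow> 'a \<Rightarrow> ('a \<times> 'a) set" where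
  "arcD E w s t = {(u, v). \<exists>xs as bs. shortest_st E w s t xs \<and> xs = as @ [u, v] @ bs}"

definition VD :: "('a \<times> 'a) set \<Rightarrow> ('a \<Rightarrow> 'a \<Rightarrow> real) \<Rightarrow> 'a \<Rightarrow> 'a \<Rightarrow> 'a set" where
  "VD E w s t = {v. \<exists>xs. shortest_st E w s t xs \<and> v \<in> set xs}"

text \<open>x \<prec> y: directed path of positive length from x to y in D+.\<close>
definition anc :: "('a \<times> 'a) set \<Rightarrow> ('a \<Rightarrow> 'a \<Rightarrow> real) \<Rightarrow> 'a \<Rightarrow> 'a \<Rightarrow> 'a \<Rightarrow> 'a \<Rightarrow> bool" where
  "anc E w s t x y \<longleftrightarrow> (x, y) \<in> (arcD E w s t)\<^sup>+"

definition dpath :: "('a \<times> 'a) set \<Rightarrow> ('a \<Rightarrow> 'a \<Rightarrow> real) \<Rightarrow> 'a \<Rightarrow> 'a \<Rightarrow> 'a \<Rightarrow> 'a \<Rightarrow> 'a list \<Rightarrow> bool" where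
  "dpath E w s t a b p \<longleftrightarrow> p \<noteq> [] \<and> hd p = a \<and> last p = b \<and>
     successively (\<lambda>x y. (x, y) \<in> arcD E w s t) p"

definition sdom :: "('a \<times> 'a) set \<Rightarrow> ('a \<Rightarrow> 'a \<Rightarrow> real) \<Rightarrow> 'a \<Rightarrow> 'a \<Rightarrow> 'a \<Rightarrow> 'a \<Rightarrow> bool" where
  "sdom E w s t v x \<longleftrightarrow> x \<in> VD E w s t \<and> x \<noteq> s \<and> v \<noteq> x \<and>
     (\<forall>p. dpath E w s t s x p \<longrightarrow> v \<in> set p)"

definition tdom :: "('a \<times> 'a) set \<Rightarrow> ('a \<Rightarrow> 'a \<Rightarrow> real) \<Rightarrow> 'a \<Rightarrow> 'a \<Rightarrow> 'a \<Rightarrow> 'a \<Rightarrow> bool" where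
  "tdom E w s t v x \<longleftrightarrow> x \<in> VD E w s t \<and> x \<noteq> t \<and> v \<noteq> x \<and>
     (\<forall>p. dpath E w s t x t p \<longrightarrow> v \<in> set p)"

definition Is :: "('a \<times> 'a) set \<Rightarrow> ('a \<Rightarrow> 'a \<Rightarrow> real) \<Rightarrow> 'a \<Rightarrow> 'a \<Rightarrow> 'a \<Rightarrow> 'a" where
  "Is E w s t x = (THE v. sdom E w s t v x \<and>
     (\<forall>u. sdom E w s t u x \<and> u \<noteq> v \<longrightarrow> sdom E w s t u v))"

definition It :: "('a \<times> 'a) set \<Rightarrow> ('a \<Rightarrow> 'a \<Rightarrow> real) \<Rightarrow> 'a \<Rightarrow> 'a \<Rightarrow> 'a \<Rightarrow> 'a" where
  "It E w s t x = (THE v. tdom E w s t v x \<and>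
     (\<forall>u. tdom E w s t u x \<and> u \<noteq> v \<longrightarrow> tdom E w s t u v))"

definition Cset :: "('a \<times> 'a) set \<Rightarrow> ('a \<Rightarrow> 'a \<Rightarrow> real) \<Rightarrow> 'a \<Rightarrow> 'a \<Rightarrow> 'a \<Rightarrow> 'a set" where
  "Cset E w s t x = {v. anc E w s t (Is E w s t x) v \<and> anc E w s t v x}"

definition gfun :: "('a \<times> 'a) set \<Rightarrow> ('a \<Rightarrow> 'a \<Rightarrow> real) \<Rightarrow> 'a \<Rightarrow> 'a \<Rightarrow> 'a \<Rightarrow> 'a \<Rightarrow> ereal" where
  "gfun E w s t x y = (if y \<in> Cset E w s t x \<and> anc E w s t x (It E w s t y)
     then ereal (dist_G E w y x) else \<infinity>)"

definition gstar :: "('a \<times> 'a) set \<Rightarrow> ('a \<Rightarrow> 'a \<Rightarrow> real) \<Rightarrow> 'a \<Rightarrow> 'a \<Rightarrow> 'a \<Rightarrow> ereal" where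
  "gstar E w s t x = (INF y \<in> VD E w s t. gfun E w s t x y)"

end

theory Submission
  imports Defs
begin
lemma wl_simps[simp]:
  "walk_len w [] = 0" "walk_len w [x] = 0"
  "walk_len w (a # b # xs) = w a b + walk_len w (b # xs)"
  by (auto simp: walk_len_def)

lemma wl_app: "walk_len w (xs @ y # ys) = walk_len w (xs @ [y]) + walk_len w (y # ys)"
  by (induction xs rule: induct_list012) auto

lemma succ_set:
  assumes "successively (\<lambda>a b. (a, b) \<in> E) (x # xs)" "E \<subseteq> V \<times> V" "x \<in> V"
  shows "set (x # xs) \<subseteq> V"
  using assms by (induction xs arbitrary: x) auto

lemma succ_hd:
  "successively (\<lambda>x y. (x, y) \<in> A) xs \<Longrightarrow> v \<in> set xs \<Longrightarrow> (hd xs, v) \<in> A\<^sup>*"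
proof (induction xs)
  case Nil then show ?case by simp
next
  case (Cons x xs)
  show ?case
  proof (cases "v = x")
    case True then show ?thesis by simp
  next
    case False
    then have "xs \<noteq> []" "v \<in> set xs" using Cons.prems by auto
    then have "(hd xs, v) \<in> A\<^sup>*" "(x, hd xs) \<in> A" using Cons by (auto simp: successively_Cons)
    then show ?thesis by auto
  qed
qed

lemma succ_last:
  "successively (\<lambda>x y. (x, y) \<in> A) xs \<Longrightarrow> v \<in> set xs \<Longrightarrow> (v, last xs) \<in> A\<^sup>*"
proof (induction xs)
  case Nil then show ?case by simp
next
  case (Cons x xs)
  show ?case
  proof (cases "xs = []")
    case True then show ?thesis using Cons.prems by simp
  next
    case False
    then have sx: "successively (\<lambda>x y. (x, y) \<in> A) xs" "(x, hd xs) \<in> A"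
      using Cons.prems by (auto simp: successively_Cons)
    have "(hd xs, last xs) \<in> A\<^sup>*" using succ_hd[OF sx(1)] False by simp
    then have "(x, last xs) \<in> A\<^sup>*" using sx(2) by auto
    then show ?thesis using Cons sx False by auto
  qed
qed

locale G =
  fixes V E w s t
  assumes wg: "wgraph V E w" and sV: "s \<in> V" and tV: "t \<in> V"
begin

abbreviation "ds v \<equiv> dist_G E w s v"
abbreviation "A \<equiv> arcD E w s t"

lemma EV: "E \<subseteq> V \<times> V" using wg by (auto simp: wgraph_def)
lemma wpos: "(u, v) \<in> E \<Longrightarrow> w u v > 0" using wg by (auto simp: wgraph_def)
lemma finV: "finite V" using wg by (auto simp: wgraph_def)

lemma walk_set: "is_walk E u v xs \<Longrightarrow> u \<in> V \<Longrightarrow> set xs \<subseteq> V"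
  unfolding is_walk_def using succ_set[OF _ EV] by (cases xs) auto

lemma wl_nonneg: "successively (\<lambda>a b. (a, b) \<in> E) xs \<Longrightarrow> walk_len w xs \<ge> 0"
proof (induction xs rule: induct_list012)
  case (3 x y zs)
  then show ?case using wpos[of x y] by (auto simp: less_imp_le)
qed auto

lemma walk_exists: "u \<in> V \<Longrightarrow> v \<in> V \<Longrightarrow> \<exists>xs. is_walk E u v xs"
  using wg by (auto simp: wgraph_def)

lemma dist_le: "is_walk E u v xs \<Longrightarrow> dist_G E w u v \<le> walk_len w xs"
  unfolding dist_G_def
  apply (rule cInf_lower)
   apply blast
  apply (rule bdd_belowI[of _ 0])
  using wl_nonneg by (auto simp: is_walk_def)

lemma dist_ge: "u \<in> V \<Longrightarrow> v \<in> V \<Longrightarrow> (\<And>xs. is_walk E u v xs \<Longrightarrow> c \<le> walk_len w xs)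
   \<Longrightarrow> c \<le> dist_G E w u v"
  unfolding dist_G_def
  apply (rule cInf_greatest)
  using walk_exists by auto

lemma dist_nonneg: "u \<in> V \<Longrightarrow> v \<in> V \<Longrightarrow> 0 \<le> dist_G E w u v"
  by (rule dist_ge) (auto simp: is_walk_def wl_nonneg)

lemma walk_app:
  assumes "is_walk E u m xs" "is_walk E m v ys"
  shows "is_walk E u v (xs @ tl ys) \<and> walk_len w (xs @ tl ys) = walk_len w xs + walk_len w ys"
proof -
  obtain xs' where xs: "xs = xs' @ [m]" using assms(1) unfolding is_walk_def
    by (metis append_butlast_last_id)
  obtain ys' where ys: "ys = m # ys'" using assms(2) unfolding is_walk_def
    by (metis list.collapse)
  have "walk_len w (xs' @ m # ys') = walk_len w xs + walk_len w ys"
    using wl_app[of w xs' m ys'] xs ys by simp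
  moreover have "is_walk E u v (xs' @ m # ys')"
    using assms unfolding is_walk_def xs ys
    by (auto simp: successively_append_iff successively_Cons hd_append split: if_splits)
  ultimately show ?thesis using xs ys by simp
qed

lemma triangle:
  assumes "u \<in> V" "m \<in> V" "v \<in> V"
  shows "dist_G E w u v \<le> dist_G E w u m + dist_G E w m v"
proof -
  have key: "dist_G E w u v - walk_len w ys \<le> dist_G E w u m" if "is_walk E m v ys" for ys
  proof (rule dist_ge[OF assms(1,2)])
    fix xs assume "is_walk E u m xs"
    then show "dist_G E w u v - walk_len w ys \<le> walk_len w xs"
      using walk_app[OF _ that, of u xs] dist_le[of u v] by force
  qed
  have "dist_G E w u v - dist_G E w u m \<le> dist_G E w m v"
    by (rule dist_ge[OF assms(2,3)]) (use key in force)
  then show ?thesis by simp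
qed

end
context G begin

lemma VD_V: "v \<in> VD E w s t \<Longrightarrow> v \<in> V"
  unfolding VD_def shortest_st_def using walk_set sV by blast

lemma arc_props:
  assumes "(a, b) \<in> A"
  shows "a \<in> VD E w s t \<and> b \<in> VD E w s t \<and> ds b = ds a + dist_G E w a b \<and> dist_G E w a b > 0"
proof -
  obtain xs as bs where sh: "shortest_st E w s t xs" and xs: "xs = as @ [a, b] @ bs"
    using assms unfolding arcD_def by blast
  have wk: "is_walk E s t xs" and len: "walk_len w xs = ds t" using sh by (auto simp: shortest_st_def)
  have aVD: "a \<in> VD E w s t" "b \<in> VD E w s t" using sh xs unfolding VD_def by auto
  have sx: "successively (\<lambda>a b. (a, b) \<in> E) xs" using wk by (simp add: is_walk_def)
  have ab: "(a, b) \<in> E" using sx xs by (auto simp: successively_append_iff)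
  have pre: "is_walk E s a (as @ [a])" using wk xs
    by (auto simp: is_walk_def successively_append_iff hd_append split: if_splits)
  have suf: "is_walk E b t (b # bs)" using wk xs
    by (auto simp: is_walk_def successively_append_iff)
  have L: "walk_len w xs = walk_len w (as @ [a]) + w a b + walk_len w (b # bs)"
    using wl_app[of w as a "b # bs"] xs by simp
  have aV: "a \<in> V" and bV: "b \<in> V" using aVD VD_V by auto
  have 1: "ds t \<le> ds b + dist_G E w b t" using triangle[OF sV bV tV] .
  have 2: "ds b \<le> ds a + dist_G E w a b" using triangle[OF sV aV bV] .
  have 3: "dist_G E w a b \<le> w a b" using dist_le[of a b "[a,b]"] ab by (simp add: is_walk_def)
  have 4: "ds a \<le> walk_len w (as @ [a])" using dist_le[OF pre] .
  have 5: "dist_G E w b t \<le> walk_len w (b # bs)" using dist_le[OF suf] .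
  have 6: "w a b > 0" using wpos ab by simp
  show ?thesis using 1 2 3 4 5 6 L len aVD by linarith
qed

lemma anc_props:
  assumes "(a, b) \<in> A\<^sup>+"
  shows "a \<in> VD E w s t \<and> b \<in> VD E w s t \<and> ds a < ds b \<and> dist_G E w a b \<le> ds b - ds a"
  using assms
proof (induction rule: trancl_induct)
  case (base y)
  then show ?case using arc_props[of a y] by auto
next
  case (step y z)
  have "y \<in> V" "z \<in> V" "a \<in> V" using step arc_props[of y z] VD_V by auto
  then have "dist_G E w a z \<le> dist_G E w a y + dist_G E w y z" using triangle by blast
  then show ?case using step arc_props[of y z] by auto
qed

lemma acyc: "(a, a) \<notin> A\<^sup>+" using anc_props by blast

lemma trancl_path: "(a, b) \<in> A\<^sup>+ \<Longrightarrow> \<exists>p. dpath E w s t a b p"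
proof (induction rule: trancl_induct)
  case (base y)
  then show ?case by (intro exI[of _ "[a, y]"]) (auto simp: dpath_def)
next
  case (step y z)
  then obtain p where p: "dpath E w s t a y p" by blast
  then have "dpath E w s t a z (p @ [z])" using step
    by (auto simp: dpath_def successively_append_iff hd_append)
  then show ?case by blast
qed

lemma dpath_mem: "dpath E w s t a b p \<Longrightarrow> v \<in> set p \<Longrightarrow> (a, v) \<in> A\<^sup>* \<and> (v, b) \<in> A\<^sup>*"
  unfolding dpath_def using succ_hd[of A p v] succ_last[of A p v] by auto

lemma dpath_app:
  assumes "dpath E w s t a b p" "dpath E w s t b c q"
  shows "dpath E w s t a c (p @ tl q) \<and> set (p @ tl q) \<subseteq> set p \<union> set q"
proof -
  obtain p' where p: "p = p' @ [b]" using assms(1) unfolding dpath_def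
    by (metis append_butlast_last_id)
  obtain q' where q: "q = b # q'" using assms(2) unfolding dpath_def
    by (metis list.collapse)
  have "dpath E w s t a c (p' @ b # q')"
    using assms unfolding dpath_def p q
    by (auto simp: successively_append_iff successively_Cons hd_append split: if_splits)
  then show ?thesis using p q by auto
qed

lemma succ_arcs: "shortest_st E w s t xs \<Longrightarrow> successively (\<lambda>x y. (x, y) \<in> A) xs"
proof -
  assume sh: "shortest_st E w s t xs"
  have "(xs ! i, xs ! Suc i) \<in> A" if i: "Suc i < length xs" for i
  proof -
    have "xs = take i xs @ [xs ! i, xs ! Suc i] @ drop (Suc (Suc i)) xs"
      using i by (simp add: Cons_nth_drop_Suc id_take_nth_drop)
    then show ?thesis using sh unfolding arcD_def by blast
  qed
  then show ?thesis unfolding successively_conv_nth by blast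
qed

lemma VD_path: assumes "v \<in> VD E w s t" shows "\<exists>p. dpath E w s t v t p"
proof -
  obtain xs where sh: "shortest_st E w s t xs" and v: "v \<in> set xs" using assms unfolding VD_def by blast
  obtain as bs where xs: "xs = as @ v # bs" using split_list[OF v] by blast
  have wk: "is_walk E s t xs" using sh by (simp add: shortest_st_def)
  have "successively (\<lambda>x y. (x, y) \<in> A) xs" using succ_arcs sh by blast
  then have "dpath E w s t v t (v # bs)" using wk xs
    by (auto simp: dpath_def is_walk_def successively_append_iff)
  then show ?thesis by blast
qed

lemma VD_anc_t: "v \<in> VD E w s t \<Longrightarrow> v \<noteq> t \<Longrightarrow> (v, t) \<in> A\<^sup>+"
  using VD_path dpath_mem rtrancl_eq_or_trancl unfolding dpath_def by (metis last_in_set)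

lemma tdom_anc: "tdom E w s t v x \<Longrightarrow> (x, v) \<in> A\<^sup>+"
  unfolding tdom_def using VD_path dpath_mem rtrancl_eq_or_trancl by metis

lemma It_ok:
  assumes x: "x \<in> VD E w s t" "x \<noteq> t"
  shows "tdom E w s t (It E w s t x) x"
proof -
  let ?D = "{v. tdom E w s t v x}"
  have tD: "t \<in> ?D" using x unfolding tdom_def dpath_def by auto
  have DV: "?D \<subseteq> V" using tdom_anc anc_props VD_V by blast
  have fin: "finite ?D" using finite_subset[OF DV finV] .
  define m where "m = Min (ds ` ?D)"
  have "m \<in> ds ` ?D" unfolding m_def using fin tD by (intro Min_in) auto
  then obtain v where vD: "v \<in> ?D" and vm: "ds v = m" by blast
  have vmin: "\<And>u. u \<in> ?D \<Longrightarrow> ds v \<le> ds u" unfolding vm m_def using fin by simp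
  let ?P = "\<lambda>v. tdom E w s t v x \<and> (\<forall>u. tdom E w s t u x \<and> u \<noteq> v \<longrightarrow> tdom E w s t u v)"
  have Pv: "?P v"
  proof (intro conjI allI impI)
    show "tdom E w s t v x" using vD by simp
  next
    fix u assume u: "tdom E w s t u x \<and> u \<noteq> v"
    obtain p0 where p0: "dpath E w s t x t p0" using VD_path x by blast
    have xv: "(x, v) \<in> A\<^sup>+" using tdom_anc vD by simp
    have vVD: "v \<in> VD E w s t" using anc_props[OF xv] by simp
    have xu: "(x, u) \<in> A\<^sup>+" using tdom_anc u by simp
    have "u \<in> set p0" using u p0 unfolding tdom_def by blast
    then have ut: "(u, t) \<in> A\<^sup>*" using dpath_mem p0 by blast
    have vt: "v \<noteq> t"
    proof
      assume "v = t"
      then have "(u, t) \<in> A\<^sup>+" using ut u by (auto simp: rtrancl_eq_or_trancl)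
      then have "ds u < ds v" using anc_props \<open>v = t\<close> by blast
      then show False using vmin u by force
    qed
    obtain q where q: "dpath E w s t x v q" using trancl_path[OF xv] by blast
    have "u \<in> set p" if p: "dpath E w s t v t p" for p
    proof -
      have pq: "dpath E w s t x t (q @ tl p)" "set (q @ tl p) \<subseteq> set q \<union> set p"
        using dpath_app[OF q p] by auto
      then have "u \<in> set q \<union> set p" using u unfolding tdom_def by blast
      moreover have "u \<notin> set q"
      proof
        assume "u \<in> set q"
        then have "(u, v) \<in> A\<^sup>*" using dpath_mem q by blast
        then have "(u, v) \<in> A\<^sup>+" using u by (auto simp: rtrancl_eq_or_trancl)
        then have "ds u < ds v" using anc_props by blast
        then show False using vmin u by force
      qed
      ultimately show ?thesis by blast
    qed
    then show "tdom E w s t u v" using vVD vt u unfolding tdom_def by blast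
  qed
  have uniq: "v' = v" if "?P v'" for v'
  proof (rule ccontr)
    assume ne: "v' \<noteq> v"
    then have "tdom E w s t v' v" "tdom E w s t v v'" using that Pv by auto
    then have "(v, v') \<in> A\<^sup>+" "(v', v) \<in> A\<^sup>+" using tdom_anc by auto
    then show False using acyc by (meson trancl_trans)
  qed
  have "It E w s t x = v" unfolding It_def using Pv uniq by (rule the_equality)
  then show ?thesis using Pv by simp
qed

end
context G begin

lemma main:
  assumes "vj \<in> VD E w s t - {s}" and "vi \<in> VD E w s t - {s}" and "vj \<noteq> vi"
    and "dist_G E w s vj \<le> dist_G E w s vi"
    and "y \<in> Cset E w s t vj \<inter> Cset E w s t vi"
    and "\<not> anc E w s t vj vi"
  shows "gstar E w s t vj \<noteq> \<infinity> \<and>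
    (INF u \<in> {u. anc E w s t u y}. gfun E w s t vi u) \<ge> gstar E w s t vj"
proof -
  have Isy: "(Is E w s t vj, y) \<in> A\<^sup>+" and yj: "(y, vj) \<in> A\<^sup>+" and yi: "(y, vi) \<in> A\<^sup>+"
    using assms(5) by (auto simp: Cset_def anc_def)
  have nji: "(vj, vi) \<notin> A\<^sup>+" using assms(6) by (simp add: anc_def)
  have nij: "(vi, vj) \<notin> A\<^sup>+" using anc_props assms(4) by force
  let ?S = "{v. (v, vj) \<in> A\<^sup>+ \<and> (v, vi) \<in> A\<^sup>+ \<and> (y, v) \<in> A\<^sup>*}"
  have yS: "y \<in> ?S" using yj yi by simp
  have SV: "?S \<subseteq> V" using anc_props VD_V by blast
  have fin: "finite ?S" using finite_subset[OF SV finV] .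
  define m where "m = Max (ds ` ?S)"
  have "m \<in> ds ` ?S" unfolding m_def using fin yS by (intro Max_in) auto
  then obtain y' where y'S: "y' \<in> ?S" and y'm: "ds y' = m" by blast
  have y'max: "\<And>u. u \<in> ?S \<Longrightarrow> ds u \<le> ds y'" unfolding y'm m_def using fin by simp
  have y'j: "(y', vj) \<in> A\<^sup>+" and y'i: "(y', vi) \<in> A\<^sup>+" and yy': "(y, y') \<in> A\<^sup>*" using y'S by auto
  have y'VD: "y' \<in> VD E w s t" using anc_props y'j by blast
  have y't: "y' \<noteq> t"
  proof
    assume "y' = t"
    have "vj \<in> VD E w s t" using assms(1) by simp
    then have "vj = t \<or> (vj, t) \<in> A\<^sup>+" using VD_anc_t by blast
    then show False using y'j \<open>y' = t\<close> acyc by (meson trancl_trans)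
  qed
  define z where "z = It E w s t y'"
  have tz: "tdom E w s t z y'" unfolding z_def using It_ok y'VD y't by blast
  then have zy': "z \<noteq> y'" unfolding tdom_def by blast
  obtain q1 where q1: "dpath E w s t y' vj q1" using trancl_path[OF y'j] by blast
  obtain pj where pj: "dpath E w s t vj t pj" using VD_path assms(1) by blast
  obtain q2 where q2: "dpath E w s t y' vi q2" using trancl_path[OF y'i] by blast
  obtain pii where pii: "dpath E w s t vi t pii" using VD_path assms(2) by blast
  have "z \<in> set q1 \<union> set pj" using dpath_app[OF q1 pj] tz unfolding tdom_def by blast
  then have M1: "((y', z) \<in> A\<^sup>* \<and> (z, vj) \<in> A\<^sup>*) \<or> (vj, z) \<in> A\<^sup>*"
    using dpath_mem q1 pj by blast
  have "z \<in> set q2 \<union> set pii" using dpath_app[OF q2 pii] tz unfolding tdom_def by blast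
  then have M2: "((y', z) \<in> A\<^sup>* \<and> (z, vi) \<in> A\<^sup>*) \<or> (vi, z) \<in> A\<^sup>*"
    using dpath_mem q2 pii by blast
  have zj: "z \<noteq> vj"
  proof
    assume "z = vj"
    then show False using M2 nji nij assms(3) zy'
      by (auto simp: rtrancl_eq_or_trancl)
  qed
  have jz: "(vj, z) \<in> A\<^sup>+"
  proof (rule ccontr)
    assume nz: "(vj, z) \<notin> A\<^sup>+"
    then have "(vj, z) \<notin> A\<^sup>*" using zj by (auto simp: rtrancl_eq_or_trancl)
    then have a1: "(y', z) \<in> A\<^sup>+" "(z, vj) \<in> A\<^sup>+" using M1 zj zy' by (auto simp: rtrancl_eq_or_trancl)
    show False
    proof (cases "(vi, z) \<in> A\<^sup>*")
      case True
      then show ?thesis using a1 nij by (meson rtrancl_trancl_trancl)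
    next
      case False
      then have "(z, vi) \<in> A\<^sup>*" using M2 by blast
      moreover have "z \<noteq> vi" using a1 nij by blast
      ultimately have "(z, vi) \<in> A\<^sup>+" by (auto simp: rtrancl_eq_or_trancl)
      moreover have "(y, z) \<in> A\<^sup>*" using yy' a1 by (meson rtrancl_trancl_trancl trancl_into_rtrancl)
      ultimately have "z \<in> ?S" using a1 by blast
      then have "ds z \<le> ds y'" using y'max by blast
      moreover have "ds y' < ds z" using anc_props a1 by blast
      ultimately show False by simp
    qed
  qed
  have y'C: "y' \<in> Cset E w s t vj"
    using Isy yy' y'j trancl_rtrancl_trancl[OF Isy yy'] unfolding Cset_def anc_def by blast
  have gy': "gfun E w s t vj y' = ereal (dist_G E w y' vj)"
    unfolding gfun_def using y'C jz z_def by (simp add: anc_def)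
  have gle: "gstar E w s t vj \<le> ereal (dist_G E w y' vj)"
    unfolding gstar_def using y'VD gy' by (metis INF_lower)
  have dy': "dist_G E w y' vj \<le> ds vj - ds y'" using anc_props y'j by blast
  have dyy': "ds y \<le> ds y'" using yy' anc_props by (auto simp: rtrancl_eq_or_trancl less_imp_le)
  have part2: "gstar E w s t vj \<le> gfun E w s t vi u" if u: "(u, y) \<in> A\<^sup>+" for u
  proof (cases "gfun E w s t vi u = \<infinity>")
    case True then show ?thesis by simp
  next
    case False
    then have gu: "gfun E w s t vi u = ereal (dist_G E w u vi)" unfolding gfun_def by (auto split: if_splits)
    have ui: "(u, vi) \<in> A\<^sup>+" using u yi by (meson trancl_trans)
    have uV: "u \<in> V" "vi \<in> V" using anc_props ui VD_V by auto
    have tri: "ds vi \<le> ds u + dist_G E w u vi" using triangle[OF sV uV] .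
    have "ds u < ds y" using anc_props u by blast
    then have "dist_G E w y' vj \<le> dist_G E w u vi" using tri dy' dyy' assms(4) by linarith
    then show ?thesis using gle gu by (metis ereal_less_eq(3) order_trans)
  qed
  show ?thesis
  proof
    show "gstar E w s t vj \<noteq> \<infinity>" using gle by auto
    show "(INF u \<in> {u. anc E w s t u y}. gfun E w s t vi u) \<ge> gstar E w s t vj"
      by (rule INF_greatest) (use part2 in \<open>auto simp: anc_def\<close>)
  qed
qed

end
theorem corollary2:
  fixes V :: "'a set" and E :: "('a \<times> 'a) set" and w :: "'a \<Rightarrow> 'a \<Rightarrow> real"
    and s t vj vi y :: 'a
  assumes "wgraph V E w" and "s \<in> V" and "t \<in> V"
    and "vj \<in> VD E w s t - {s}" and "vi \<in> VD E w s t - {s}" and "vj \<noteq> vi"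
    and "dist_G E w s vj \<le> dist_G E w s vi"
    and "y \<in> Cset E w s t vj \<inter> Cset E w s t vi"
    and "\<not> anc E w s t vj vi"
  shows "gstar E w s t vj \<noteq> \<infinity> \<and>
    (INF u \<in> {u. anc E w s t u y}. gfun E w s t vi u) \<ge> gstar E w s t vj"
proof -
  interpret G V E w s t using assms(1-3) by unfold_locales
  show ?thesis using main[OF assms(4-9)] .
qed

end
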